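(* Let $\mathcal{X}$ be Polish and $\mathcal{H}\subseteq\{0,1\}^{\mathcal{X}}$ a measurable concept class that has an infinite Littlestone tree. Then for any learning algorithm $\hat h_n$ there exists a realizable distribution $P$ such that $\mathbf{E}[\mathrm{er}_P(\hat h_n)]\ge\frac{1}{32n}$ for infinitely many $n$. In particular, $\mathcal{H}$ is not learnable at rate faster than $\frac1n$.
   Context: $\mathcal{H}$ measurable: there is a Polish $\Theta$ and Borel $\mathsf{h}:\Theta\times\mathcal{X}\to\{0,1\}$ with $\mathcal{H}=\{\mathsf{h}(\theta,\cdot)\}$. $\mathrm{er}_P(h)=P\{(x,y):h(x)\ne y\}$; $P$ realizable if $\inf_{h\in\mathcal{H}}\mathrm{er}_P(h)=0$. A learning algorithm is a sequence of universally measurable maps $H_n:(\mathcal{X}\times\{0,1\})^n\times\mathcal{X}\to\{0,1\}$ with $\hat h_n(x)=H_n((X_1,Y_1),\ldots,(X_n,Y_n),x)$ for i.i.d. $(X_i,Y_i)\sim P$. Not learnable faster than $R$: every algorithm has a realizable $P$ and $C,c>0$ with $\mathbf{E}[\mathrm{er}_P(\hat h_n)]\ge CR(cn)$ for infinitely many $n$. Littlestone tree of depth $d\le\infty$: a collection $\{x_{\mathbf u}:0\le k<d,\ \mathbf u\in\{0,1\}^k\}\subseteq\mathcal{X}$ such that for every $\mathbf y\in\{0,1\}^d$ and $n<d$ there is $h\in\mathcal{H}$ with $h(x_{\mathbf y_{\le k}})=y_{k+1}$ for $0\le k\le n$, $\mathbf y_{\le k}=(y_1,\ldots,y_k)$.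 Infinite: $d=\infty$. *)

theory Defs
  imports "HOL-Probability.Probability"
begin

definition example_space :: "('x::topological_space \<times> bool) measure" where
  "example_space = borel \<Otimes>\<^sub>M count_space UNIV"

definition sample_test_space :: "nat \<Rightarrow> ((nat \<Rightarrow> 'x::topological_space \<times> bool) \<times> 'x) measure" where
  "sample_test_space n = (\<Pi>\<^sub>M i\<in>{..<n}. example_space) \<Otimes>\<^sub>M borel"

definition universally_measurable :: "'a measure \<Rightarrow> ('a \<Rightarrow> bool) \<Rightarrow> bool" where
  "universally_measurable M f \<longleftrightarrow>
     (\<forall>\<mu>. prob_space \<mu> \<and> sets \<mu> = sets M \<longrightarrow> f \<in> measurable (completion \<mu>) (count_space UNIV))"

text \<open>A learning algorithm: H n S x is the prediction at x after seeing the sample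
  S 0, ..., S (n-1).\<close>
definition learning_algorithm :: "(nat \<Rightarrow> (nat \<Rightarrow> 'x::topological_space \<times> bool) \<Rightarrow> 'x \<Rightarrow> bool) \<Rightarrow> bool" where
  "learning_algorithm H \<longleftrightarrow>
     (\<forall>n. universally_measurable (sample_test_space n) (\<lambda>(S, x). H n S x))"

definition distribution :: "('x::topological_space \<times> bool) measure \<Rightarrow> bool" where
  "distribution P \<longleftrightarrow> prob_space P \<and> sets P = sets example_space"

text \<open>er_P(h) = P{(x,y). h x \<noteq> y} (completed measure, since hypotheses output by
  the algorithm are only universally measurable).\<close>
definition er :: "('x \<times> bool) measure \<Rightarrow> ('x \<Rightarrow> bool) \<Rightarrow> real" where
  "er P h = measure (completion P) {p \<in> space P. h (fst p) \<noteq> snd p}"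

text \<open>Measurable concept class H = {h(theta, .)} with Theta Polish and h Borel.\<close>
definition measurable_class :: "('t::polish_space \<Rightarrow> 'x::polish_space \<Rightarrow> bool) \<Rightarrow> bool" where
  "measurable_class h \<longleftrightarrow> {p. h (fst p) (snd p)} \<in> sets (borel :: ('t \<times> 'x) measure)"

definition realizable :: "('t \<Rightarrow> 'x \<Rightarrow> bool) \<Rightarrow> ('x \<times> bool) measure \<Rightarrow> bool" where
  "realizable h P \<longleftrightarrow> (INF \<theta>. er P (h \<theta>)) = 0"

definition expected_error ::
  "(nat \<Rightarrow> (nat \<Rightarrow> 'x \<times> bool) \<Rightarrow> 'x \<Rightarrow> bool) \<Rightarrow> ('x \<times> bool) measure \<Rightarrow> nat \<Rightarrow> ennreal" where
  "expected_error H P n =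
     (\<integral>\<^sup>+ S. ennreal (er P (H n S)) \<partial>completion (\<Pi>\<^sub>M i\<in>{..<n}. P))"

text \<open>Infinite Littlestone tree: nodes indexed by finite bit strings u (lists), the node
  of depth k along branch y being x (y_1,...,y_k).\<close>
definition infinite_littlestone_tree :: "('t \<Rightarrow> 'x \<Rightarrow> bool) \<Rightarrow> (bool list \<Rightarrow> 'x) \<Rightarrow> bool" where
  "infinite_littlestone_tree h T \<longleftrightarrow>
     (\<forall>y :: nat \<Rightarrow> bool. \<forall>n. \<exists>\<theta>. \<forall>k\<le>n. h \<theta> (T (map y [0..<k])) = y k)"

definition has_infinite_littlestone_tree :: "('t \<Rightarrow> 'x \<Rightarrow> bool) \<Rightarrow> bool" where
  "has_infinite_littlestone_tree h \<longleftrightarrow> (\<exists>T. infinite_littlestone_tree h T)"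

definition not_learnable_faster ::
  "('t \<Rightarrow> 'x::topological_space \<Rightarrow> bool) \<Rightarrow> (real \<Rightarrow> real) \<Rightarrow> bool" where
  "not_learnable_faster h R \<longleftrightarrow>
     (\<forall>H. learning_algorithm H \<longrightarrow>
        (\<exists>P C c. distribution P \<and> realizable h P \<and> C > 0 \<and> c > 0 \<and>
           infinite {n. expected_error H P n \<ge> ennreal (C * R (c * real n))}))"

end

theory Submission
  imports Defs
begin

lemma space_ex: "space (example_space :: ('x::topological_space \<times> bool) measure) = UNIV"
  by (simp add: example_space_def space_pair_measure)

lemma single_ex: "{p} \<in> sets (example_space :: ('x::polish_space \<times> bool) measure)"
proof -
  obtain a b where p: "p = (a, b)" by (cases p)
  have "{p} = {a} \<times> {b}" using p by auto
  moreover have "{a} \<in> sets (borel :: 'x measure)" by (simp add: borel_closed)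
  ultimately show ?thesis unfolding example_space_def
    using pair_measureI[of "{a}" borel "{b}" "count_space UNIV"] by simp
qed

definition Pd :: "('x::polish_space \<times> bool) pmf \<Rightarrow> ('x \<times> bool) measure" where
  "Pd q = distr (measure_pmf q) example_space id"

lemma Pd_sets: "sets (Pd q) = sets example_space"
  by (simp add: Pd_def)

lemma Pd_space: "space (Pd q) = UNIV"
  by (simp add: Pd_def space_ex)

lemma Pd_dist: "distribution (Pd q)"
  unfolding distribution_def Pd_def
  by (auto intro!: measure_pmf.prob_space_distr simp: space_ex)

lemma Pd_emeasure: "A \<in> sets example_space \<Longrightarrow> emeasure (Pd q) A = emeasure (measure_pmf q) A"
  unfolding Pd_def by (subst emeasure_distr) (auto simp: space_ex)

lemma Pd_single: "emeasure (Pd q) {p} = ennreal (pmf q p)"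
  using Pd_emeasure[OF single_ex] by (simp add: emeasure_pmf_single)

lemma Pd_compl: "measure (completion (Pd q)) A = measure_pmf.prob q A"
proof -
  let ?C = "set_pmf q"
  have C: "A \<inter> ?C \<in> sets (Pd q)"
    by (rule sets.countable) (auto simp: Pd_sets single_ex)
  have C2: "?C \<in> sets (Pd q)"
    by (rule sets.countable) (auto simp: Pd_sets single_ex)
  have N: "UNIV - ?C \<in> null_sets (Pd q)"
  proof -
    have "UNIV - ?C \<in> sets (Pd q)" using C2 Pd_space
      by (metis sets.compl_sets)
    moreover have "emeasure (Pd q) (UNIV - ?C) = 0"
      using calculation emeasure_Int_set_pmf[of q "UNIV - ?C"] by (simp add: Pd_emeasure Pd_sets Int_commute)
    ultimately show ?thesis by auto
  qed
  have N2: "A - ?C \<in> null_sets (completion (Pd q))"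
    by (rule null_sets_completion_subset[OF _ null_sets_completionI[OF N]]) auto
  have "A = (A \<inter> ?C) \<union> (A - ?C)" by auto
  then have "measure (completion (Pd q)) A = measure (completion (Pd q)) (A \<inter> ?C)"
    using N2 C by (metis measure_Un_null_set sets_completionI_sets)
  also have "\<dots> = measure (Pd q) (A \<inter> ?C)" using C by simp
  also have "\<dots> = measure_pmf.prob q (A \<inter> ?C)"
    using C by (simp add: measure_def Pd_emeasure Pd_sets)
  also have "\<dots> = measure_pmf.prob q A" by (rule measure_Int_set_pmf)
  finally show ?thesis .
qed

lemma er_Pd: "er (Pd q) f = measure_pmf.prob q {p. f (fst p) \<noteq> snd p}"
  unfolding er_def by (simp add: Pd_space Pd_compl)

lemma Pi_single_eq:
  fixes n :: nat
  assumes "S \<in> space (\<Pi>\<^sub>M i\<in>{..<n}. Pd q)"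
  shows "{S} = (\<Pi>\<^sub>E i\<in>{..<n}. {S i})"
proof -
  have S: "S \<in> extensional {..<n}" using assms by (simp add: space_PiM PiE_def)
  show ?thesis
  proof (intro set_eqI iffI)
    fix x assume "x \<in> (\<Pi>\<^sub>E i\<in>{..<n}. {S i})"
    then have x: "\<forall>i<n. x i = S i" "x \<in> extensional {..<n}" by (auto simp: PiE_iff)
    have "x = S"
    proof
      fix i show "x i = S i"
        using x S by (cases "i < n") (auto simp: extensional_def)
    qed
    then show "x \<in> {S}" by simp
  qed (use S in \<open>auto simp: extensional_def\<close>)
qed

lemma Pi_B:
  fixes q :: "('x::polish_space \<times> bool) pmf" and n :: nat
  assumes "finite B" "B \<subseteq> space (\<Pi>\<^sub>M i\<in>{..<n}. Pd q)"
  shows "B \<in> sets (\<Pi>\<^sub>M i\<in>{..<n}. Pd q)"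
    and "emeasure (\<Pi>\<^sub>M i\<in>{..<n}. Pd q) B = ennreal (\<Sum>S\<in>B. \<Prod>i<n. pmf q (S i))"
proof -
  have sf: "sigma_finite_measure (Pd q)"
    using Pd_dist unfolding distribution_def by (metis prob_space_imp_sigma_finite)
  interpret product_sigma_finite "\<lambda>_. Pd q"
    unfolding product_sigma_finite_def using sf by simp
  have sing: "{S} \<in> sets (\<Pi>\<^sub>M i\<in>{..<n}. Pd q)" if "S \<in> B" for S
  proof -
    have "{S} = (\<Pi>\<^sub>E i\<in>{..<n}. {S i})" by (rule Pi_single_eq, rule subsetD[OF assms(2) that])
    moreover have "(\<Pi>\<^sub>E i\<in>{..<n}. {S i}) \<in> sets (\<Pi>\<^sub>M i\<in>{..<n}. Pd q)"
      by (rule sets_PiM_I_finite) (auto simp: Pd_sets single_ex)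
    ultimately show ?thesis by simp
  qed
  show "B \<in> sets (\<Pi>\<^sub>M i\<in>{..<n}. Pd q)"
    by (rule sets.countable) (use sing assms in \<open>auto intro: countable_finite\<close>)
  have "emeasure (\<Pi>\<^sub>M i\<in>{..<n}. Pd q) B = (\<Sum>S\<in>B. emeasure (\<Pi>\<^sub>M i\<in>{..<n}. Pd q) {S})"
    by (rule emeasure_eq_sum_singleton) (use sing assms in auto)
  also have "\<dots> = (\<Sum>S\<in>B. \<Prod>i<n. ennreal (pmf q (S i)))"
  proof (rule sum.cong[OF refl])
    fix S assume "S \<in> B"
    then have "{S} = (\<Pi>\<^sub>E i\<in>{..<n}. {S i})" by (intro Pi_single_eq[of S n q] subsetD[OF assms(2)])
    then show "emeasure (\<Pi>\<^sub>M i\<in>{..<n}. Pd q) {S} = (\<Prod>i<n. ennreal (pmf q (S i)))"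
      by (simp add: emeasure_PiM Pd_sets single_ex Pd_single)
  qed
  also have "\<dots> = ennreal (\<Sum>S\<in>B. \<Prod>i<n. pmf q (S i))"
    by (simp add: prod_ennreal prod_nonneg sum_nonneg)
  finally show "emeasure (\<Pi>\<^sub>M i\<in>{..<n}. Pd q) B = ennreal (\<Sum>S\<in>B. \<Prod>i<n. pmf q (S i))" .
qed

lemma geo_sum: "(\<Sum>j<k. (1/2::real)^j * (1/2)) = 1 - (1/2)^k"
  by (induction k) (auto simp: field_simps)


lemma lower_bound:
  fixes h :: "'t::polish_space \<Rightarrow> 'x::polish_space \<Rightarrow> bool"
    and H :: "nat \<Rightarrow> (nat \<Rightarrow> 'x \<times> bool) \<Rightarrow> 'x \<Rightarrow> bool"
  assumes tree: "infinite_littlestone_tree h T"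
  shows "\<exists>P. distribution P \<and> realizable h P \<and>
           infinite {n. n \<ge> 1 \<and> expected_error H P n \<ge> ennreal (1 / (32 * real n))}"
proof -
  define g :: "nat pmf" where "g = geometric_pmf (1/2::real)"
  have pg: "pmf g j = (1/2)^j * (1/2)" for j by (simp add: g_def)
  define atm where "atm = (\<lambda>(u::bool list) j. (T (take j u), u ! j))"
  define r where "r = (\<lambda>u p. sum (pmf g) {j\<in>{..<length u}. atm u j = p})"
  define N where "N = (\<lambda>u::bool list. (2::nat)^(length u - 2))"
  define D where "D = (\<lambda>u. PiE {..<N u} (\<lambda>_. atm u ` {..<length u}))"
  define \<Phi> where "\<Phi> = (\<lambda>u b. \<Sum>S\<in>{S\<in>D u. H (N u) S (T u) \<noteq> b}. \<Prod>i<N u. r u (S i))"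
  define ch where "ch = (\<lambda>u. \<Phi> u False \<le> \<Phi> u True)"
  define pre where "pre = rec_nat [] (\<lambda>k u. u @ [ch u])"
  define y where "y = (\<lambda>k. ch (pre k))"
  have pre0: "pre 0 = []" and preS: "pre (Suc k) = pre k @ [y k]" for k
    by (simp_all add: pre_def y_def)
  have pre_map: "pre k = map y [0..<k]" for k
    by (induction k) (simp_all add: pre0 preS)
  have len: "length (pre k) = k" for k by (simp add: pre_map)
  define at_y where "at_y = (\<lambda>j. (T (map y [0..<j]), y j))"
  define q where "q = map_pmf at_y g"
  define P where "P = Pd q"
  have atm_eq: "atm (pre k) j = at_y j" if "j < k" for j k
    using that by (simp add: atm_def at_y_def pre_map take_map)
  have r_nn: "0 \<le> r u p" for u p by (simp add: r_def sum_nonneg)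
  have r_le: "r (pre k) p \<le> pmf q p" for k p
  proof -
    have "r (pre k) p = measure g {j\<in>{..<k}. atm (pre k) j = p}"
      by (simp add: r_def len measure_measure_pmf_finite)
    also have "\<dots> \<le> measure g (at_y -` {p})"
      by (rule measure_pmf.finite_measure_mono) (use atm_eq in auto)
    also have "\<dots> = pmf q p" by (simp add: q_def pmf_map)
    finally show ?thesis .
  qed
  have sumL: "(\<Sum>p\<in>atm u ` {..<length u}. r u p) = 1 - (1/2)^(length u)" for u
  proof -
    have "(\<Sum>p\<in>atm u ` {..<length u}. r u p) = (\<Sum>j<length u. pmf g j)"
      unfolding r_def using sum.image_gen[of "{..<length u}" "pmf g" "atm u"] by simp
    also have "\<dots> = 1 - (1/2)^(length u)" by (simp only: pg geo_sum)
    finally show ?thesis .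
  qed
  have total: "\<Phi> u True + \<Phi> u False = (1 - (1/2)^(length u))^(N u)" for u
  proof -
    have fin: "finite (D u)" by (simp add: D_def finite_PiE)
    have deq: "{S\<in>D u. H (N u) S (T u) \<noteq> True} \<union> {S\<in>D u. H (N u) S (T u) \<noteq> False} = D u"
      by auto
    have "\<Phi> u True + \<Phi> u False = (\<Sum>S\<in>{S\<in>D u. H (N u) S (T u) \<noteq> True} \<union> {S\<in>D u. H (N u) S (T u) \<noteq> False}. \<Prod>i<N u. r u (S i))"
      unfolding \<Phi>_def by (rule sum.union_disjoint[symmetric]) (use fin in auto)
    also have "\<dots> = (\<Sum>S\<in>D u. \<Prod>i<N u. r u (S i))" by (simp only: deq)
    also have "\<dots> = (\<Prod>i<N u. \<Sum>p\<in>atm u ` {..<length u}. r u p)"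
      unfolding D_def by (rule prod_sum_PiE[symmetric]) auto
    also have "\<dots> = (1 - (1/2)^(length u))^(N u)" by (simp add: sumL)
    finally show ?thesis .
  qed
  have choice: "\<Phi> u (ch u) \<ge> (1 - (1/2)^(length u))^(N u) / 2" for u
    using total[of u] unfolding ch_def by (cases "\<Phi> u False \<le> \<Phi> u True") auto

  have bound: "expected_error H P (2^m) \<ge> ennreal (1 / (32 * real (2^m)))" for m
  proof -
    define k where "k = m + 2"
    define u where "u = pre k"
    define n :: nat where "n = 2^m"
    have lu: "length u = k" by (simp add: u_def len)
    have Nu: "N u = n" by (simp add: N_def lu k_def n_def)
    have n1: "real n \<ge> 1" by (simp add: n_def)
    have half: "(1/2::real)^k = 1 / (4 * real n)"
      by (simp add: k_def n_def power_add power_divide)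
    have "(1 - (1/2::real)^k)^n \<ge> 3/4"
    proof -
      have "1 + real n * (- (1 / (4 * real n))) \<le> (1 + (- (1 / (4 * real n))))^n"
        by (rule Bernoulli_inequality) (use n1 in \<open>simp add: field_simps\<close>)
      moreover have "1 + real n * (- (1 / (4 * real n))) = 3/4" using n1 by (simp add: field_simps)
      ultimately show ?thesis by (simp add: half)
    qed
    then have Phi: "\<Phi> u (y k) \<ge> 3/8"
      using choice[of u] by (simp add: y_def u_def[symmetric] lu Nu)
    define B where "B = {S\<in>D u. H n S (T u) \<noteq> y k}"
    let ?M = "\<Pi>\<^sub>M i\<in>{..<n}. Pd q"
    have finB: "finite B" by (simp add: B_def D_def finite_PiE)
    have Bsp: "B \<subseteq> space ?M"
    proof -
      have "B \<subseteq> D u" by (auto simp: B_def)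
      also have "D u \<subseteq> PiE {..<n} (\<lambda>_. UNIV)"
        unfolding D_def Nu by (rule PiE_mono) auto
      finally show ?thesis by (simp add: space_PiM Pd_space)
    qed
    have Bsets: "B \<in> sets ?M" and Bem: "emeasure ?M B = ennreal (\<Sum>S\<in>B. \<Prod>i<n. pmf q (S i))"
      using Pi_B[OF finB Bsp] by auto
    have PhiB: "\<Phi> u (y k) \<le> (\<Sum>S\<in>B. \<Prod>i<n. pmf q (S i))"
      unfolding \<Phi>_def B_def Nu
      by (intro sum_mono prod_mono conjI r_nn) (unfold u_def, rule r_le)
    have pt: "ennreal (pmf g k) * indicator B S \<le> ennreal (er P (H n S))" for S
    proof (cases "S \<in> B")
      case True
      then have ne: "H n S (T u) \<noteq> y k" by (simp add: B_def)
      have "er P (H n S) = measure g (at_y -` {p. H n S (fst p) \<noteq> snd p})"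
        by (simp add: P_def er_Pd q_def)
      also have "\<dots> \<ge> measure g {k}"
      proof (rule measure_pmf.finite_measure_mono)
        have "at_y k = (T u, y k)" by (simp add: at_y_def u_def pre_map)
        then show "{k} \<subseteq> at_y -` {p. H n S (fst p) \<noteq> snd p}" using ne by simp
      qed simp
      finally show ?thesis using True by (simp add: measure_pmf_single ennreal_leI)
    qed simp
    have "ennreal (pmf g k) * emeasure ?M B = (\<integral>\<^sup>+ S. ennreal (pmf g k) * indicator B S \<partial>completion ?M)"
      using Bsets by (simp add: nn_integral_cmult_indicator)
    also have "\<dots> \<le> (\<integral>\<^sup>+ S. ennreal (er P (H n S)) \<partial>completion ?M)"
      by (rule nn_integral_mono) (rule pt)
    also have "\<dots> = expected_error H P n"
      by (simp add: expected_error_def P_def)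
    finally have E1: "ennreal (pmf g k) * emeasure ?M B \<le> expected_error H P n" .
    have E2: "ennreal (pmf g k * \<Phi> u (y k)) \<le> ennreal (pmf g k) * emeasure ?M B"
    proof -
      have "pmf g k * \<Phi> u (y k) \<le> pmf g k * (\<Sum>S\<in>B. \<Prod>i<n. pmf q (S i))"
        by (rule mult_left_mono[OF PhiB]) simp
      then have "ennreal (pmf g k * \<Phi> u (y k)) \<le> ennreal (pmf g k * (\<Sum>S\<in>B. \<Prod>i<n. pmf q (S i)))"
        by (rule ennreal_leI)
      also have "\<dots> = ennreal (pmf g k) * emeasure ?M B"
        using Bem by (simp add: ennreal_mult sum_nonneg prod_nonneg)
      finally show ?thesis .
    qed
    have E: "expected_error H P n \<ge> ennreal (pmf g k * \<Phi> u (y k))"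
      using E1 E2 by (rule order_trans[rotated])
    have pk: "pmf g k = 1 / (8 * real n)" using half by (simp add: pg)
    have "pmf g k * (3/8) \<le> pmf g k * \<Phi> u (y k)"
      by (rule mult_left_mono[OF Phi]) simp
    moreover have "1 / (32 * real n) \<le> pmf g k * (3/8)"
      unfolding pk using n1 by (simp add: field_simps)
    ultimately have "pmf g k * \<Phi> u (y k) \<ge> 1 / (32 * real n)" by linarith
    then have "ennreal (1 / (32 * real n)) \<le> ennreal (pmf g k * \<Phi> u (y k))"
      by (rule ennreal_leI)
    then show ?thesis using E unfolding n_def by (rule order_trans)
  qed

  have real: "realizable h P"
  proof -
    have er_le: "\<exists>\<theta>. er P (h \<theta>) \<le> (1/2)^(Suc d)" for d
    proof -
      obtain \<theta> where th: "\<forall>k\<le>d. h \<theta> (T (map y [0..<k])) = y k"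
        using tree unfolding infinite_littlestone_tree_def by blast
      have "er P (h \<theta>) = measure g (at_y -` {p. h \<theta> (fst p) \<noteq> snd p})"
        by (simp add: P_def er_Pd q_def)
      also have "\<dots> \<le> measure g (UNIV - {..<Suc d})"
        by (rule measure_pmf.finite_measure_mono) (use th in \<open>auto simp: at_y_def\<close>)
      also have "\<dots> = 1 - measure g {..<Suc d}"
        using measure_pmf.prob_compl[of "{..<Suc d}" g] by simp
      also have "\<dots> = (1/2)^(Suc d)"
        using geo_sum[of "Suc d"] by (simp add: measure_measure_pmf_finite pg del: power_Suc)
      finally show ?thesis by blast
    qed
    have nn: "er P (h \<theta>) \<ge> 0" for \<theta> by (simp add: er_def)
    have bdd: "bdd_below (range (\<lambda>\<theta>. er P (h \<theta>)))" using nn by (intro bdd_belowI[of _ 0]) auto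
    have ge: "(INF \<theta>. er P (h \<theta>)) \<ge> 0" by (rule cINF_greatest) (auto simp: nn)
    have le: "(INF \<theta>. er P (h \<theta>)) \<le> 0"
    proof (rule ccontr)
      assume "\<not> ?thesis"
      then have pos: "(INF \<theta>. er P (h \<theta>)) > 0" by simp
      obtain d where d: "(1/2::real)^d < (INF \<theta>. er P (h \<theta>))"
        using real_arch_pow_inv[OF pos, of "1/2"] by auto
      obtain \<theta> where "er P (h \<theta>) \<le> (1/2)^(Suc d)" using er_le by blast
      moreover have "(1/2::real)^(Suc d) \<le> (1/2)^d" by (simp add: power_decreasing)
      moreover have "(INF \<theta>. er P (h \<theta>)) \<le> er P (h \<theta>)" by (rule cINF_lower[OF bdd]) simp
      ultimately show False using d by linarith
    qed
    show ?thesis unfolding realizable_def using ge le by linarith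
  qed
  have inf: "infinite {n. n \<ge> 1 \<and> expected_error H P n \<ge> ennreal (1 / (32 * real n))}"
  proof (rule infinite_super)
    show "range (\<lambda>m::nat. (2::nat)^m) \<subseteq> {n. n \<ge> 1 \<and> expected_error H P n \<ge> ennreal (1 / (32 * real n))}"
      using bound by auto
    show "infinite (range (\<lambda>m::nat. (2::nat)^m))"
      by (rule range_inj_infinite) (simp add: inj_def)
  qed
  show ?thesis using Pd_dist real inf unfolding P_def by blast
qed

theorem mainTheorem8:
  fixes h :: "'t::polish_space \<Rightarrow> 'x::polish_space \<Rightarrow> bool"
  assumes "measurable_class h"
    and "has_infinite_littlestone_tree h"
  shows "(\<forall>H. learning_algorithm H \<longrightarrow>
            (\<exists>P. distribution P \<and> realizable h P \<and>
               infinite {n. n \<ge> 1 \<and> expected_error H P n \<ge> ennreal (1 / (32 * real n))}))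
         \<and> not_learnable_faster h (\<lambda>t. 1 / t)"
proof -
  obtain T where T: "infinite_littlestone_tree h T"
    using assms(2) unfolding has_infinite_littlestone_tree_def by blast
  have A: "\<exists>P. distribution P \<and> realizable h P \<and>
               infinite {n. n \<ge> 1 \<and> expected_error H P n \<ge> ennreal (1 / (32 * real n))}" for H
    by (rule lower_bound[OF T])
  have B: "not_learnable_faster h (\<lambda>t. 1 / t)"
    unfolding not_learnable_faster_def
  proof (intro allI impI)
    fix H :: "nat \<Rightarrow> (nat \<Rightarrow> 'x \<times> bool) \<Rightarrow> 'x \<Rightarrow> bool"
    obtain P where P: "distribution P" "realizable h P"
      "infinite {n. n \<ge> 1 \<and> expected_error H P n \<ge> ennreal (1 / (32 * real n))}"
      using A by blast
    have "infinite {n. expected_error H P n \<ge> ennreal (1/32 * (1 / (1 * real n)))}"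
      by (rule infinite_super[OF _ P(3)]) auto
    then show "\<exists>P C c. distribution P \<and> realizable h P \<and> C > 0 \<and> c > 0 \<and>
           infinite {n. expected_error H P n \<ge> ennreal (C * (1 / (c * real n)))}"
      using P by (intro exI[of _ P] exI[of _ "1/32::real"] exI[of _ "1::real"]) auto
  qed
  show ?thesis using A B by blast
qed

end
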